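(* Let $R$ be the holistic system robustness random variable (defined in the context), with distribution $\pi_R$, so that $\mathbb{P}_{\pi_R}[-R\le a]=1$. Let $\alpha\in(0,1]$ and define \[ L(x,\mu,t)=t\left(\mu+\frac{1}{\alpha}\max\left\{\frac{x}{t}-\mu,0\right\}\right),\qquad u_b(\mu,t)=L(a,\mu,t). \] For $N$ independent samples $r_1,\dots,r_N$ of $R$, let $\zeta^*_N(\mu,t)=\max_{1\le k\le N}L(-r_k,\mu,t)$. Then for all $\epsilon\in[0,1]$, \[ \mathbb{P}^N_{\pi_R}\left[r^*_C\triangleq\inf_{\mu\in\mathbb{R},\ t>0}\zeta^*_N(\mu,t)(1-\epsilon)+u_b(\mu,t)\epsilon\ \ge\ \mathrm{CVaR}_\alpha(-R)\right]\ge 1-(1-\epsilon)^N. \]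
   Context: System setting: $\dot x = f(x,u)+\xi$, $x\in\mathcal{X}\subset\mathbb{R}^n$, $u=U(x,\theta)\in\mathcal{U}\subset\mathbb{R}^m$, $\theta\in\Theta\subset\mathbb{R}^p$ a parameter fixed along a trajectory, and $\xi$ stochastic noise with unknown distribution $\pi_\xi(x,u,t)$. $x^\theta$ denotes the resulting closed-loop state signal in $\mathcal{S}=\{s:\mathbb{R}_{\ge0}\to\mathbb{R}^n\}$ from an initial condition $x_0\in\mathcal{X}_0\subseteq\mathcal{X}$. A robustness metric is a function $\rho:\mathcal{S}\to[-a,b]$ with $a,b>0$ such that $\rho(s)\ge0$ only for signals exhibiting desired properties. The holistic system robustness $R$ is the scalar random variable whose samples are $r=\rho(x^\theta)$, where $(x_0,\theta)$ is sampled uniformly from $\mathcal{X}_0\times\Theta$ (and the trajectory is subject to the noise). Conditional-Value-at-Risk: $\mathrm{CVaR}_\alpha(Z)=\inf_{z\in\mathbb{R}} z+\frac{\mathbb{E}[\max(Z-z,0)]}{\alpha}$. $\zeta^*_N(\mu,t)$ is the solution of $\min_\zeta\zeta$ s.t. $\zeta\ge L(-r_i,\mu,t)$ for all $i$; $\mathbb{P}^N_{\pi_R}$ is the $N$-fold product measure of the i.i.d. sample. *)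

theory Defs
  imports "HOL-Probability.Probability"
begin

definition CVaR :: "real \<Rightarrow> 'a measure \<Rightarrow> ('a \<Rightarrow> real) \<Rightarrow> real" where
  "CVaR \<alpha> M Z = (INF z::real. z + (\<integral>x. max (Z x - z) 0 \<partial>M) / \<alpha>)"

definition Lfun :: "real \<Rightarrow> real \<Rightarrow> real \<Rightarrow> real \<Rightarrow> real" where
  "Lfun \<alpha> x \<mu> t = t * (\<mu> + (1 / \<alpha>) * max (x / t - \<mu>) 0)"

definition zeta_star :: "real \<Rightarrow> nat \<Rightarrow> (nat \<Rightarrow> real) \<Rightarrow> real \<Rightarrow> real \<Rightarrow> real" where
  "zeta_star \<alpha> N r \<mu> t = Max ((\<lambda>k. Lfun \<alpha> (- r k) \<mu> t) ` {..<N})"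

definition r_C :: "real \<Rightarrow> real \<Rightarrow> real \<Rightarrow> nat \<Rightarrow> (nat \<Rightarrow> real) \<Rightarrow> real" where
  "r_C \<alpha> a \<epsilon> N r = (INF p \<in> {p :: real \<times> real. snd p > 0}.
      zeta_star \<alpha> N r (fst p) (snd p) * (1 - \<epsilon>) + Lfun \<alpha> a (fst p) (snd p) * \<epsilon>)"

end

theory Submission
  imports Defs
begin

definition Gf :: "real \<Rightarrow> real \<Rightarrow> real \<Rightarrow> real" where
  "Gf \<alpha> z x = z + max (x - z) 0 / \<alpha>"

lemma Lfun_Gf: "t > 0 \<Longrightarrow> Lfun \<alpha> x \<mu> t = Gf \<alpha> (t * \<mu>) x"
proof -
  assume t: "t > 0"
  have "t * max (x / t - \<mu>) 0 = max (x - t * \<mu>) 0"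
    using t by (simp add: max_def field_simps)
  then show ?thesis unfolding Lfun_def Gf_def
    by (simp add: algebra_simps)
qed

lemma Gf_mono: "\<alpha> > 0 \<Longrightarrow> x \<le> y \<Longrightarrow> Gf \<alpha> z x \<le> Gf \<alpha> z y"
  unfolding Gf_def by (intro add_left_mono divide_right_mono) auto

lemma Gf_ge: "\<alpha> > 0 \<Longrightarrow> \<alpha> \<le> 1 \<Longrightarrow> x \<le> Gf \<alpha> z x"
proof -
  assume a: "\<alpha> > 0" "\<alpha> \<le> 1"
  have "max (x - z) 0 \<le> max (x - z) 0 / \<alpha>"
    using a by (simp add: le_divide_eq mult_left_le)
  then show ?thesis unfolding Gf_def by linarith
qed

lemma zeta_Gf:
  assumes "N > 0" "t > 0" "\<alpha> > 0"
  shows "zeta_star \<alpha> N r \<mu> t = Gf \<alpha> (t * \<mu>) (Max ((\<lambda>k. - r k) ` {..<N}))"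
proof -
  have m: "mono (Gf \<alpha> (t * \<mu>))" using Gf_mono assms(3) by (auto simp: mono_def)
  have "Gf \<alpha> (t * \<mu>) (Max ((\<lambda>k. - r k) ` {..<N})) = Max (Gf \<alpha> (t * \<mu>) ` ((\<lambda>k. - r k) ` {..<N}))"
    using assms(1) by (intro mono_Max_commute[OF m]) auto
  then show ?thesis unfolding zeta_star_def using assms(2)
    by (simp add: Lfun_Gf image_image)
qed

definition hf :: "real \<Rightarrow> real \<Rightarrow> real \<Rightarrow> real \<Rightarrow> real" where
  "hf \<alpha> a \<epsilon> m = (INF p \<in> {p :: real \<times> real. snd p > 0}.
      Gf \<alpha> (snd p * fst p) m * (1 - \<epsilon>) + Gf \<alpha> (snd p * fst p) a * \<epsilon>)"

lemma rC_hf: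
  assumes "N > 0" "\<alpha> > 0"
  shows "r_C \<alpha> a \<epsilon> N r = hf \<alpha> a \<epsilon> (Max ((\<lambda>k. - r k) ` {..<N}))"
  unfolding r_C_def hf_def
  using zeta_Gf[OF assms(1) _ assms(2)] by (intro INF_cong refl) (auto simp: Lfun_Gf)

lemma hf_mono:
  assumes "\<alpha> > 0" "\<alpha> \<le> 1" "0 \<le> \<epsilon>" "\<epsilon> \<le> 1"
  shows "mono (hf \<alpha> a \<epsilon>)"
proof (rule monoI)
  fix m m' :: real assume mm: "m \<le> m'"
  let ?P = "{p :: real \<times> real. snd p > 0}"
  have "(0,1) \<in> ?P" by simp
  then have ne: "?P \<noteq> {}" by blast
  have bdd: "bdd_below ((\<lambda>p. Gf \<alpha> (snd p * fst p) m * (1 - \<epsilon>) + Gf \<alpha> (snd p * fst p) a * \<epsilon>) ` ?P)"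
  proof (rule bdd_belowI2[of _ "m * (1 - \<epsilon>) + a * \<epsilon>"])
    fix p
    show "m * (1 - \<epsilon>) + a * \<epsilon> \<le> Gf \<alpha> (snd p * fst p) m * (1 - \<epsilon>) + Gf \<alpha> (snd p * fst p) a * \<epsilon>"
      using assms Gf_ge[OF assms(1,2)] by (intro add_mono mult_right_mono) auto
  qed
  show "hf \<alpha> a \<epsilon> m \<le> hf \<alpha> a \<epsilon> m'"
    unfolding hf_def
  proof (rule cINF_mono[OF ne bdd])
    fix p assume "p \<in> ?P"
    then show "\<exists>n\<in>?P. Gf \<alpha> (snd n * fst n) m * (1 - \<epsilon>) + Gf \<alpha> (snd n * fst n) a * \<epsilon>
        \<le> Gf \<alpha> (snd p * fst p) m' * (1 - \<epsilon>) + Gf \<alpha> (snd p * fst p) a * \<epsilon>"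
      using assms Gf_mono[OF assms(1) mm] by (intro bexI[of _ p]) (auto intro: mult_right_mono)
  qed
qed

theorem corollary5:
  fixes M :: "real measure" and a b \<alpha> \<epsilon> :: real and N :: nat
  assumes "prob_space M"
    and "sets M = sets borel"
    and "a > 0" and "b > 0"
    and "AE r in M. - a \<le> r \<and> r \<le> b"
    and "0 < \<alpha>" and "\<alpha> \<le> 1"
    and "0 \<le> \<epsilon>" and "\<epsilon> \<le> 1"
  shows "measure (PiM {..<N} (\<lambda>_. M))
           {r \<in> space (PiM {..<N} (\<lambda>_. M)). r_C \<alpha> a \<epsilon> N r \<ge> CVaR \<alpha> M (\<lambda>x. - x)}
         \<ge> 1 - (1 - \<epsilon>) ^ N"
proof -
  interpret P: prob_space M by fact
  define PP where "PP = PiM {..<N} (\<lambda>_. M)"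
  interpret Pi: prob_space PP unfolding PP_def by (intro prob_space_PiM) (auto simp: P.prob_space_axioms)
  interpret PS: product_sigma_finite "\<lambda>_. M"
    by unfold_locales
  define c where "c = CVaR \<alpha> M (\<lambda>x. - x)"
  define S where "S = {r \<in> space PP. r_C \<alpha> a \<epsilon> N r \<ge> c}"
  have spM: "space M = UNIV" using sets_eq_imp_space_eq[OF assms(2)] by simp
  have setsM: "A \<in> sets M" if "A \<in> sets borel" for A using that assms(2) by simp
  have measM: "f \<in> borel_measurable M" if "f \<in> borel_measurable borel" for f :: "real \<Rightarrow> real"
    using that measurable_cong_sets[OF assms(2) refl] by metis
  show ?thesis
  proof (cases "N = 0")
    case True
    then show ?thesis by (auto simp: zero_power)
  next
    case False
    then have N: "N > 0" by auto

    have int_max: "integrable M (\<lambda>x. max (- x - z) 0)" for z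
    proof (rule P.integrable_const_bound[where B="a + \<bar>z\<bar>"])
      show "AE x in M. norm (max (- x - z) 0) \<le> a + \<bar>z\<bar>"
        using assms(5) by (rule eventually_mono) (use assms(3) in auto)
      show "(\<lambda>x. max (- x - z) 0) \<in> borel_measurable M" by (intro measM) measurable
    qed
    have bddC: "bdd_below ((\<lambda>z. z + (\<integral>x. max (- x - z) 0 \<partial>M) / \<alpha>) ` UNIV)"
    proof (rule bdd_belowI2[of _ "- b"])
      fix z :: real
      have I0: "0 \<le> (\<integral>x. max (- x - z) 0 \<partial>M)" by (intro integral_nonneg_AE) auto
      have I1: "(\<integral>x. max (- x - z) 0 \<partial>M) \<le> (\<integral>x. max (- x - z) 0 \<partial>M) / \<alpha>"
        using I0 assms(6,7) by (simp add: le_divide_eq mult_left_le)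
      show "- b \<le> z + (\<integral>x. max (- x - z) 0 \<partial>M) / \<alpha>"
      proof (cases "z \<ge> - b")
        case True then show ?thesis using I0 I1 by linarith
      next
        case False
        have "AE x in M. - b - z \<le> max (- x - z) 0"
          using assms(5) by (rule eventually_mono) auto
        then have "- b - z \<le> (\<integral>x. max (- x - z) 0 \<partial>M)"
          by (intro P.integral_ge_const int_max)
        then show ?thesis using I1 by linarith
      qed
    qed
    have C_le: "c \<le> (\<integral>x. Gf \<alpha> z (- x) \<partial>M)" for z
    proof -
      have "c \<le> z + (\<integral>x. max (- x - z) 0 \<partial>M) / \<alpha>"
        unfolding c_def CVaR_def by (rule cINF_lower[OF bddC]) simp
      also have "\<dots> = (\<integral>x. Gf \<alpha> z (- x) \<partial>M)"
        unfolding Gf_def using int_max[of z]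
        by (simp add: Bochner_Integration.integral_add P.prob_space)
      finally show ?thesis .
    qed
    have mlow: "measure M {..< - a} = 0"
    proof -
      have "measure M {..< - a} = measure M {}"
        using assms(5) by (intro measure_eq_AE) (auto simp: setsM)
      then show ?thesis by simp
    qed
    have mhigh: "measure M {..< b + 1} = 1"
    proof -
      have "measure M {..< b + 1} = measure M (space M)"
        using assms(5) by (intro measure_eq_AE) (auto simp: setsM spM)
      then show ?thesis by (simp add: P.prob_space)
    qed
    have mA: "{..<s} \<in> sets M" "{..s} \<in> sets M" "{s<..} \<in> sets M" for s :: real by (auto simp: setsM)
    have "\<exists>q. - a \<le> q \<and> measure M {..<q} \<le> \<epsilon> \<and> \<epsilon> \<le> measure M {..q}"
    proof (cases "\<epsilon> = 1")
      case True
      have "measure M {..< b + 1} \<le> measure M {..b + 1}"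
        by (intro P.finite_measure_mono) (auto simp: setsM)
      then show ?thesis using True mhigh assms(3,4) by (intro exI[of _ "b + 1"]) (auto simp: P.prob_le_1)
    next
      case False
      then have e1: "\<epsilon> < 1" using assms(9) by auto
      define Q where "Q = {s. measure M {..<s} \<le> \<epsilon>}"
      have aQ: "- a \<in> Q" unfolding Q_def using mlow assms(8) by simp
      have Qb: "s \<le> b + 1" if "s \<in> Q" for s
      proof (rule ccontr)
        assume "\<not> s \<le> b + 1"
        then have "measure M {..< b + 1} \<le> measure M {..<s}"
          by (intro P.finite_measure_mono) (auto simp: setsM)
        then show False using that e1 mhigh unfolding Q_def by simp
      qed
      have Qne: "Q \<noteq> {}" using aQ by blast
      have Qbdd: "bdd_above Q" using Qb by (intro bdd_aboveI) blast
      define q where "q = Sup Q"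
      have qa: "- a \<le> q" unfolding q_def by (rule cSup_upper[OF aQ Qbdd])
      have P1: "measure M {..<q} \<le> \<epsilon>"
      proof -
        define A where "A n = {..< q - 1 / real (Suc n)}" for n
        have inc: "incseq A" unfolding A_def
          by (intro monoI) (auto simp: frac_le)
        have U: "(\<Union>n. A n) = {..<q}"
        proof (intro set_eqI iffI)
          fix x assume "x \<in> (\<Union>n. A n)"
          then obtain n where "x < q - 1 / real (Suc n)" by (auto simp: A_def)
          moreover have "0 < 1 / real (Suc n)" by simp
          ultimately have "x < q" by linarith
          then show "x \<in> {..<q}" by simp
        next
          fix x assume "x \<in> {..<q}"
          then have "q - x > 0" by simp
          then obtain n where "inverse (real (Suc n)) < q - x"
            using reals_Archimedean by blast
          then have "1 / real (Suc n) < q - x" by (simp add: inverse_eq_divide)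
          then have "x < q - 1 / real (Suc n)" by linarith
          then show "x \<in> (\<Union>n. A n)" unfolding A_def by blast
        qed
        have rngA: "range A \<subseteq> sets M" by (auto simp: A_def mA)
      have lim: "(\<lambda>n. measure M (A n)) \<longlonglongrightarrow> measure M {..<q}"
          using P.finite_Lim_measure_incseq[OF rngA inc] U by simp
        have le: "measure M (A n) \<le> \<epsilon>" for n
        proof -
          have "q - 1 / real (Suc n) < Sup Q" unfolding q_def[symmetric] by simp
          then obtain s where s: "s \<in> Q" "q - 1 / real (Suc n) < s"
            using less_cSup_iff[OF Qne Qbdd] by blast
          have "measure M (A n) \<le> measure M {..<s}"
            using s by (intro P.finite_measure_mono) (auto simp: A_def setsM)
          then show ?thesis using s unfolding Q_def by simp
        qed
        show ?thesis using lim le by (intro LIMSEQ_le_const2) auto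
      qed
      have P2: "\<epsilon> \<le> measure M {..q}"
      proof -
        define A where "A n = {..< q + 1 / real (Suc n)}" for n
        have dec: "decseq A" unfolding A_def
          by (intro antimonoI) (auto simp: frac_le)
        have U: "(\<Inter>n. A n) = {..q}"
        proof (intro set_eqI iffI)
          fix x assume x: "x \<in> {..q}"
          have "x < q + 1 / real (Suc n)" for n
          proof -
            have "0 < 1 / real (Suc n)" by simp
            moreover have "x \<le> q" using x by simp
            ultimately show ?thesis by linarith
          qed
          then show "x \<in> (\<Inter>n. A n)" by (auto simp: A_def)
        next
          fix x assume x: "x \<in> (\<Inter>n. A n)"
          show "x \<in> {..q}"
          proof (rule ccontr)
            assume "x \<notin> {..q}"
            then have "x - q > 0" by simp
            then obtain n where "inverse (real (Suc n)) < x - q"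
              using reals_Archimedean by blast
            then have "1 / real (Suc n) < x - q" by (simp add: inverse_eq_divide)
            moreover have "x < q + 1 / real (Suc n)" using x unfolding A_def by blast
            ultimately show False by linarith
          qed
        qed
        have rngA: "range A \<subseteq> sets M" by (auto simp: A_def mA)
      have lim: "(\<lambda>n. measure M (A n)) \<longlonglongrightarrow> measure M {..q}"
          using P.finite_Lim_measure_decseq[OF rngA dec] U by simp
        have le: "\<epsilon> \<le> measure M (A n)" for n
        proof -
          have "q + 1 / real (Suc n) \<notin> Q"
          proof
            assume "q + 1 / real (Suc n) \<in> Q"
            then have "q + 1 / real (Suc n) \<le> q" unfolding q_def by (rule cSup_upper[OF _ Qbdd])
            then show False by simp
          qed
          then show ?thesis unfolding Q_def A_def by simp
        qed
        show ?thesis using lim le by (intro LIMSEQ_le_const) auto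
      qed
        show ?thesis using qa P1 P2 by blast
      qed
    then obtain q where qa: "- a \<le> q" and P1: "measure M {..<q} \<le> \<epsilon>" and P2: "\<epsilon> \<le> measure M {..q}" by blast
    have key: "c \<le> Gf \<alpha> z (- q) * (1 - \<epsilon>) + Gf \<alpha> z a * \<epsilon>" for z
    proof -
      define D where "D = Gf \<alpha> z a - Gf \<alpha> z (- q)"
      have D0: "0 \<le> D" unfolding D_def using Gf_mono[OF assms(6), of "- q" a] qa by simp
      have "(\<integral>x. Gf \<alpha> z (- x) \<partial>M) \<le> (\<integral>x. Gf \<alpha> z (- q) + D * indicator {..<q} x \<partial>M)"
      proof (rule integral_mono_AE)
        show "integrable M (\<lambda>x. Gf \<alpha> z (- x))"
          unfolding Gf_def using int_max[of z] by (intro Bochner_Integration.integrable_add) auto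
        show "integrable M (\<lambda>x. Gf \<alpha> z (- q) + D * indicator {..<q} x)"
          by (intro Bochner_Integration.integrable_add integrable_mult_right integrable_real_indicator) (auto simp: mA P.emeasure_finite less_top[symmetric])
        show "AE x in M. Gf \<alpha> z (- x) \<le> Gf \<alpha> z (- q) + D * indicator {..<q} x"
          using assms(5)
        proof eventually_elim
          case (elim x)
          show ?case
          proof (cases "x < q")
            case True
            then show ?thesis using Gf_mono[OF assms(6), of "- x" a z] elim unfolding D_def by simp
          next
            case False
            then show ?thesis using Gf_mono[OF assms(6), of "- x" "- q" z] D0 by simp
          qed
        qed
      qed
      also have "\<dots> = Gf \<alpha> z (- q) + D * measure M {..<q}"
        by (simp add: Bochner_Integration.integral_add P.prob_space mA P.emeasure_finite less_top[symmetric])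
      also have "\<dots> \<le> Gf \<alpha> z (- q) + D * \<epsilon>"
        using P1 D0 by (intro add_left_mono mult_left_mono) auto
      also have "\<dots> = Gf \<alpha> z (- q) * (1 - \<epsilon>) + Gf \<alpha> z a * \<epsilon>"
        unfolding D_def by (simp add: algebra_simps)
      finally show ?thesis using C_le[of z] by linarith
    qed
    define F where "F r = Max ((\<lambda>k. - r k) ` {..<N})" for r :: "nat \<Rightarrow> real"
    have setsPP: "sets PP = sets (PiM {..<N} (\<lambda>_. borel :: real measure))"
      unfolding PP_def by (intro sets_PiM_cong) (auto simp: assms(2))
    have hm[measurable]: "hf \<alpha> a \<epsilon> \<in> borel_measurable borel"
      by (rule borel_measurable_mono[OF hf_mono[OF assms(6,7,8,9)]])
    have gm0: "(\<lambda>r. hf \<alpha> a \<epsilon> (F r)) \<in> borel_measurable (PiM {..<N} (\<lambda>_. borel :: real measure))"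
      unfolding F_def by measurable
    have gm[measurable]: "(\<lambda>r. hf \<alpha> a \<epsilon> (F r)) \<in> borel_measurable PP"
      using gm0 measurable_cong_sets[OF setsPP refl] by metis
    have S_eq: "S = {r \<in> space PP. c \<le> hf \<alpha> a \<epsilon> (F r)}"
      unfolding S_def F_def using rC_hf[OF N assms(6)] by simp
    have Sm: "S \<in> sets PP" unfolding S_eq by measurable
    define Bd where "Bd = PiE {..<N} (\<lambda>_. {q<..})"
    have Bdm: "Bd \<in> sets PP" unfolding Bd_def PP_def
      by (intro sets_PiM_I_finite) (auto simp: mA)
    have "emeasure PP Bd = (\<Prod>i\<in>{..<N}. emeasure M {q<..})"
      unfolding Bd_def PP_def by (rule PS.emeasure_PiM) (auto simp: mA)
    also have "\<dots> = ennreal (measure M {q<..} ^ N)"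
      by (simp add: P.emeasure_eq_measure ennreal_power prod_ennreal)
    finally have "measure PP Bd = measure M {q<..} ^ N"
      by (simp add: Pi.emeasure_eq_measure)
    moreover have "measure M {q<..} = 1 - measure M {..q}"
    proof -
      have "{q<..} = space M - {..q}" by (auto simp: spM)
      then show ?thesis using P.prob_compl[of "{..q}"] mA by simp
    qed
    ultimately have mBd: "measure PP Bd \<le> (1 - \<epsilon>) ^ N"
      using P2 by (auto intro!: power_mono)
    have sub: "space PP - Bd \<subseteq> S"
    proof
      fix r assume r: "r \<in> space PP - Bd"
      then have rs: "r \<in> space PP" by blast
      have "r \<in> PiE {..<N} (\<lambda>_. space M)" using rs unfolding PP_def by (simp add: space_PiM)
      then obtain k where k: "k < N" "r k \<le> q" using r unfolding Bd_def by (auto simp: PiE_iff not_less)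
      have "c \<le> r_C \<alpha> a \<epsilon> N r"
        unfolding r_C_def
      proof (rule cINF_greatest)
        have "((0::real), (1::real)) \<in> {p :: real \<times> real. snd p > 0}" by simp
        then show "{p :: real \<times> real. snd p > 0} \<noteq> {}" by blast
      next
        fix p :: "real \<times> real" assume p: "p \<in> {p. snd p > 0}"
        define z where "z = snd p * fst p"
        have "Lfun \<alpha> (- r k) (fst p) (snd p) \<le> zeta_star \<alpha> N r (fst p) (snd p)"
          unfolding zeta_star_def using k by (intro Max_ge) auto
        moreover have "Lfun \<alpha> (- r k) (fst p) (snd p) = Gf \<alpha> z (- r k)"
          using p by (simp add: Lfun_Gf z_def)
        moreover have "Gf \<alpha> z (- q) \<le> Gf \<alpha> z (- r k)" using Gf_mono[OF assms(6)] k by simp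
        moreover have "Lfun \<alpha> a (fst p) (snd p) = Gf \<alpha> z a"
          using p by (simp add: Lfun_Gf z_def)
        ultimately have "Gf \<alpha> z (- q) * (1 - \<epsilon>) + Gf \<alpha> z a * \<epsilon> \<le>
            zeta_star \<alpha> N r (fst p) (snd p) * (1 - \<epsilon>) + Lfun \<alpha> a (fst p) (snd p) * \<epsilon>"
          using assms(9) by (auto intro!: mult_right_mono)
        then show "c \<le> zeta_star \<alpha> N r (fst p) (snd p) * (1 - \<epsilon>) + Lfun \<alpha> a (fst p) (snd p) * \<epsilon>"
          using key[of z] by linarith
      qed
      then show "r \<in> S" unfolding S_def using rs by simp
    qed
    have "1 - (1 - \<epsilon>) ^ N \<le> 1 - measure PP Bd" using mBd by simp
    also have "\<dots> = measure PP (space PP - Bd)" using Pi.prob_compl[OF Bdm] by simp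
    also have "\<dots> \<le> measure PP S" using sub Sm by (intro Pi.finite_measure_mono) auto
    finally show ?thesis unfolding S_def c_def PP_def .
  qed
qed

end
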